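(* Let $\mathbb{K}$ be a field of characteristic zero. Let $f_1,\dots,f_m\in\mathbb{K}[X]$ be nonzero polynomials with $\deg f_i=d_i$, let $(\alpha_{i,j})\in\mathbb{Z}_{\ge0}^{m\times\ell}$, let $a_1,\dots,a_\ell\in\mathbb{K}$, and let \[P=\sum_{j=1}^\ell a_j\prod_{i=1}^m f_i^{\alpha_{i,j}}\in\mathbb{K}[X].\] Let $F\in\mathbb{K}[X]$ be irreducible and let $\mu_i=\operatorname{mult}_F(f_i)$. If $P\neq0$, then \[\operatorname{mult}_F(P)\le\max_{1\le j\le\ell}\ \sum_{i=1}^m\left(\mu_i\alpha_{i,j}+(d_i-\mu_i)\binom{\ell+1-j}{2}\right).\]
   Context: For polynomials $F$ and $P\neq0$, $\operatorname{mult}_F(P)$ denotes the multiplicity of $F$ as a factor of $P$, i.e. the largest integer $\mu$ such that $F^\mu$ divides $P$. *)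

theory Defs
  imports "HOL-Computational_Algebra.Polynomial"
begin

definition mult_poly :: "'a::field poly \<Rightarrow> 'a poly \<Rightarrow> nat" where
  "mult_poly F P = (GREATEST \<mu>. F ^ \<mu> dvd P)"

end

theory Submission
  imports "Jordan_Normal_Form.Determinant" "HOL-Computational_Algebra.Polynomial_Factorial" Defs
begin

lemma coeff_mult_bound:
  fixes p q :: "'a::comm_semiring_0 poly"
  assumes "degree p \<le> dp" "degree q \<le> dq"
  shows "coeff (p * q) (dp + dq) = coeff p dp * coeff q dq"
proof (cases "degree p = dp \<and> degree q = dq")
  case True thus ?thesis using coeff_mult_degree_sum[of p q] by simp
next
  case False
  hence "degree p + degree q < dp + dq" using assms by auto
  hence "coeff (p*q) (dp+dq) = 0"
    by (meson coeff_eq_0 degree_mult_le le_less_trans)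
  moreover have "coeff p dp * coeff q dq = 0"
  proof (cases "degree p = dp")
    case True
    hence "degree q < dq" using False assms by auto
    thus ?thesis by (simp add: coeff_eq_0)
  next
    case False
    hence "degree p < dp" using assms by auto
    thus ?thesis by (simp add: coeff_eq_0)
  qed
  ultimately show ?thesis by simp
qed

lemma coeff_prod_bound:
  fixes f :: "'b \<Rightarrow> 'a::comm_semiring_1 poly"
  assumes "finite S" "\<And>i. i \<in> S \<Longrightarrow> degree (f i) \<le> d i"
  shows "coeff (prod f S) (sum d S) = (\<Prod>i\<in>S. coeff (f i) (d i))"
  using assms
proof (induction S rule: finite_induct)
  case empty thus ?case by simp
next
  case (insert x F)
  have "degree (prod f F) \<le> sum d F"
    by (rule order.trans[OF degree_prod_sum_le[OF insert(1)]], rule sum_mono, simp add: insert)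
  thus ?case using insert by (simp add: coeff_mult_bound)
qed

lemma det_dvd_gen:
  fixes A :: "nat \<Rightarrow> nat \<Rightarrow> 'a::comm_ring_1"
  assumes "\<And>k j. k < r \<Longrightarrow> j < r \<Longrightarrow> F ^ (m j + e k) dvd A k j"
  shows "F ^ (sum m {0..<r} + sum e {0..<r}) dvd det (mat r r (\<lambda>(k,j). A k j))"
proof -
  have "F ^ (sum m {0..<r} + sum e {0..<r}) dvd signof p * (\<Prod>k = 0..<r. mat r r (\<lambda>(k,j). A k j) $$ (k, p k))"
    if p: "p permutes {0..<r}" for p
  proof -
    have "sum m {0..<r} = sum (m \<circ> p) {0..<r}" using sum.permute[OF p] by simp
    hence "sum m {0..<r} + sum e {0..<r} = (\<Sum>k=0..<r. m (p k) + e k)" by (simp add: sum.distrib)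
    hence "F ^ (sum m {0..<r} + sum e {0..<r}) = (\<Prod>k=0..<r. F ^ (m (p k) + e k))"
      by (simp add: power_sum)
    also have "\<dots> dvd (\<Prod>k = 0..<r. mat r r (\<lambda>(k,j). A k j) $$ (k, p k))"
      by (rule prod_dvd_prod, insert p assms, auto simp: permutes_in_image)
    finally show ?thesis by (rule dvd_mult)
  qed
  thus ?thesis by (subst det_def'[of _ r], auto intro!: dvd_sum)
qed

lemma det_prod_dvd_gen:
  fixes A :: "nat \<Rightarrow> nat \<Rightarrow> 'a::comm_ring_1"
  assumes "\<And>k j. k < r \<Longrightarrow> j < r \<Longrightarrow> G j dvd A k j"
  shows "prod G {0..<r} dvd det (mat r r (\<lambda>(k,j). A k j))"
proof -
  have "prod G {0..<r} dvd signof p * (\<Prod>k = 0..<r. mat r r (\<lambda>(k,j). A k j) $$ (k, p k))"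
    if p: "p permutes {0..<r}" for p
  proof -
    have "prod G {0..<r} = (\<Prod>k=0..<r. G (p k))" using prod.permute[OF p] by simp
    also have "\<dots> dvd (\<Prod>k = 0..<r. mat r r (\<lambda>(k,j). A k j) $$ (k, p k))"
      by (rule prod_dvd_prod, insert p assms, auto simp: permutes_in_image)
    finally show ?thesis by (rule dvd_mult)
  qed
  thus ?thesis by (subst det_def'[of _ r], auto intro!: dvd_sum)
qed

lemma det_degree_gen:
  fixes A :: "nat \<Rightarrow> nat \<Rightarrow> 'a::comm_ring_1 poly"
  assumes "\<And>k j. k < r \<Longrightarrow> j < r \<Longrightarrow> degree (A k j) \<le> a j + b k"
  shows "degree (det (mat r r (\<lambda>(k,j). A k j))) \<le> sum a {0..<r} + sum b {0..<r}"
proof -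
  have "degree (signof p * (\<Prod>k = 0..<r. mat r r (\<lambda>(k,j). A k j) $$ (k, p k))) \<le> sum a {0..<r} + sum b {0..<r}"
    if p: "p permutes {0..<r}" for p
  proof -
    have "sum a {0..<r} = sum (a \<circ> p) {0..<r}" using sum.permute[OF p] by simp
    hence e: "sum a {0..<r} + sum b {0..<r} = (\<Sum>k=0..<r. a (p k) + b k)" by (simp add: sum.distrib)
    have "degree (\<Prod>k = 0..<r. mat r r (\<lambda>(k,j). A k j) $$ (k, p k)) \<le> (\<Sum>k=0..<r. degree (mat r r (\<lambda>(k,j). A k j) $$ (k, p k)))"
      using degree_prod_sum_le[of "{0..<r}"] by (simp add: o_def)
    also have "\<dots> \<le> (\<Sum>k=0..<r. a (p k) + b k)"
      by (rule sum_mono, insert p assms, auto simp: permutes_in_image)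
    moreover have "degree (signof p * X) \<le> degree X" for X :: "'a poly"
      using degree_mult_le[of "signof p" X] by (simp add: of_int_poly)
    ultimately show ?thesis unfolding e by (meson order.trans)
  qed
  thus ?thesis by (subst det_def'[of _ r], auto intro!: degree_sum_le simp: finite_permutations)
qed

lemma det_coeff_gen:
  fixes A :: "nat \<Rightarrow> nat \<Rightarrow> 'a::comm_ring_1 poly"
  assumes "\<And>k j. k < r \<Longrightarrow> j < r \<Longrightarrow> degree (A k j) \<le> a j + b k"
  shows "coeff (det (mat r r (\<lambda>(k,j). A k j))) (sum a {0..<r} + sum b {0..<r})
     = det (mat r r (\<lambda>(k,j). coeff (A k j) (a j + b k)))"
proof -
  have "coeff (signof p * (\<Prod>k = 0..<r. mat r r (\<lambda>(k,j). A k j) $$ (k, p k))) (sum a {0..<r} + sum b {0..<r})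
     = signof p * (\<Prod>k = 0..<r. mat r r (\<lambda>(k,j). coeff (A k j) (a j + b k)) $$ (k, p k))"
    if p: "p permutes {0..<r}" for p
  proof -
    have "sum a {0..<r} = sum (a \<circ> p) {0..<r}" using sum.permute[OF p] by simp
    hence e: "sum a {0..<r} + sum b {0..<r} = (\<Sum>k=0..<r. a (p k) + b k)" by (simp add: sum.distrib)
    have "coeff (\<Prod>k = 0..<r. mat r r (\<lambda>(k,j). A k j) $$ (k, p k)) (\<Sum>k=0..<r. a (p k) + b k)
        = (\<Prod>k = 0..<r. coeff (mat r r (\<lambda>(k,j). A k j) $$ (k, p k)) (a (p k) + b k))"
      by (rule coeff_prod_bound, insert p assms, auto simp: permutes_in_image)
    also have "\<dots> = (\<Prod>k = 0..<r. mat r r (\<lambda>(k,j). coeff (A k j) (a j + b k)) $$ (k, p k))"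
      by (rule prod.cong, insert p, auto simp: permutes_in_image)
    finally show ?thesis unfolding e
      by (simp add: of_int_poly coeff_smult) 
  qed
  thus ?thesis by (simp add: det_def'[of _ r] coeff_sum)
qed

definition dlt :: "'a::idom poly \<Rightarrow> 'a poly \<Rightarrow> 'a poly" where
  "dlt q p = q * pderiv p"

lemma dlt_iter_sum:
  "(dlt q ^^ k) (\<Sum>i\<in>S. smult (c i) (G i)) = (\<Sum>i\<in>S. smult (c i) ((dlt q ^^ k) (G i)))"
proof (induction k)
  case 0 thus ?case by simp
next
  case (Suc k)
  have "dlt q (\<Sum>i\<in>S. smult (c i) (H i)) = (\<Sum>i\<in>S. smult (c i) (dlt q (H i)))" for H
    by (induction S rule: infinite_finite_induct)
       (auto simp: dlt_def pderiv_add pderiv_smult algebra_simps)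
  thus ?case using Suc by simp
qed

lemma dvd_pderiv_pow:
  fixes F p :: "'a::idom poly"
  assumes "F ^ Suc a dvd p" shows "F ^ a dvd pderiv p"
proof -
  obtain w where w: "p = F ^ Suc a * w" using assms by (auto elim: dvdE)
  have "pderiv p = F ^ Suc a * pderiv w + w * (smult (of_nat (Suc a)) (F ^ a) * pderiv F)"
    unfolding w pderiv_mult pderiv_power_Suc by simp
  have 1: "F ^ a dvd F ^ Suc a * pderiv w" by (simp add: dvd_mult2 le_imp_power_dvd)
  have 2: "F ^ a dvd w * (smult (of_nat (Suc a)) (F ^ a) * pderiv F)"
    by (rule dvd_mult, rule dvd_mult2, rule dvd_smult, rule dvd_refl)
  show ?thesis unfolding \<open>pderiv p = _\<close> by (rule dvd_add[OF 1 2])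
qed

lemma dlt_dvd_step:
  fixes F L p :: "'a::idom poly"
  assumes "F ^ mu dvd L" "F ^ a dvd p"
  shows "F ^ (a + mu) dvd dlt (F * L) p"
proof (cases a)
  case 0
  thus ?thesis using assms by (simp add: dlt_def dvd_mult2 dvd_mult)
next
  case (Suc b)
  have "F ^ b dvd pderiv p" using assms Suc dvd_pderiv_pow by blast
  hence "F * F ^ mu * F ^ b dvd F * L * pderiv p" using assms by (intro mult_dvd_mono) auto
  thus ?thesis by (simp add: dlt_def Suc power_add algebra_simps)
qed

lemma dlt_iter_dvd:
  fixes F L p :: "'a::idom poly"
  assumes "F ^ mu dvd L" "F ^ a dvd p"
  shows "F ^ (a + k * mu) dvd (dlt (F * L) ^^ k) p"
proof (induction k)
  case 0 thus ?case using assms by simp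
next
  case (Suc k)
  from dlt_dvd_step[OF assms(1) Suc.IH] show ?case by (simp add: algebra_simps)
qed

lemma dlt_iter_self_dvd:
  fixes F L G :: "'a::idom poly"
  assumes "G dvd L * pderiv G"
  shows "G dvd (dlt (F * L) ^^ k) G"
proof (induction k)
  case 0 thus ?case by simp
next
  case (Suc k)
  then obtain N where N: "(dlt (F * L) ^^ k) G = G * N" by (auto elim: dvdE)
  obtain M where M: "L * pderiv G = G * M" using assms by (auto elim: dvdE)
  have "(dlt (F * L) ^^ Suc k) G = F * (L * pderiv G) * N + F * L * G * pderiv N"
    by (simp add: N dlt_def pderiv_mult algebra_simps)
  also have "\<dots> = G * (F * M * N + F * L * pderiv N)" by (simp add: M algebra_simps)
  finally show ?case by simp
qed

lemma dlt_degree: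
  fixes q p :: "'a::{idom,semiring_char_0} poly"
  assumes "degree q \<ge> 1"
  shows "degree (dlt q p) \<le> degree p + (degree q - 1)"
proof -
  have h1: "degree (dlt q p) \<le> degree q + degree (pderiv p)" unfolding dlt_def by (rule degree_mult_le)
  have h2: "degree (pderiv p) = degree p - 1" by (rule degree_pderiv)
  show ?thesis
  proof (cases "degree p = 0")
    case True
    hence "pderiv p = 0" by (simp add: pderiv_eq_0_iff)
    thus ?thesis by (simp add: dlt_def)
  qed (use h1 h2 assms in linarith)
qed

lemma dlt_iter_degree:
  fixes q p :: "'a::{idom,semiring_char_0} poly"
  assumes "degree q \<ge> 1"
  shows "degree ((dlt q ^^ k) p) \<le> degree p + k * (degree q - 1)"
proof (induction k)
  case 0 thus ?case by simp
next
  case (Suc k)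
  thus ?case using dlt_degree[OF assms, of "(dlt q ^^ k) p"] by simp
qed

lemma dlt_coeff:
  fixes q p :: "'a::{idom,semiring_char_0} poly"
  assumes "degree q \<ge> 1" "degree p \<le> E"
  shows "coeff (dlt q p) (E + (degree q - 1)) = lead_coeff q * of_nat E * coeff p E"
proof (cases E)
  case 0
  hence "pderiv p = 0" using assms by (simp add: pderiv_eq_0_iff)
  thus ?thesis using 0 by (simp add: dlt_def)
next
  case (Suc E')
  have dp: "degree (pderiv p) \<le> E'" using assms Suc by (simp add: degree_pderiv)
  have "E + (degree q - 1) = degree q + E'" using Suc assms by simp
  hence "coeff (dlt q p) (E + (degree q - 1)) = coeff q (degree q) * coeff (pderiv p) E'"
    unfolding dlt_def using coeff_mult_bound[OF order.refl dp] by simp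
  thus ?thesis by (simp add: coeff_pderiv Suc algebra_simps)
qed

lemma dlt_iter_coeff:
  fixes q p :: "'a::{idom,semiring_char_0} poly"
  assumes "degree q \<ge> 1" "degree p \<le> e"
  shows "coeff ((dlt q ^^ k) p) (e + k * (degree q - 1))
     = coeff p e * lead_coeff q ^ k * (\<Prod>i<k. of_nat (e + i * (degree q - 1)))"
proof (induction k)
  case 0 thus ?case by simp
next
  case (Suc k)
  have d: "degree ((dlt q ^^ k) p) \<le> e + k * (degree q - 1)"
    using dlt_iter_degree[OF assms(1), of k p] assms(2) by simp
  have "coeff ((dlt q ^^ Suc k) p) (e + Suc k * (degree q - 1))
      = coeff (dlt q ((dlt q ^^ k) p)) ((e + k * (degree q - 1)) + (degree q - 1))"
    by (metis add.assoc add.commute mult_Suc funpow.simps(2) comp_apply)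
  also have "\<dots> = lead_coeff q * of_nat (e + k * (degree q - 1)) * coeff ((dlt q ^^ k) p) (e + k * (degree q - 1))"
    by (rule dlt_coeff[OF assms(1) d])
  finally show ?case using Suc by (simp add: algebra_simps)
qed

lemma vand_lemma:
  fixes e :: "nat \<Rightarrow> nat" and w :: "nat \<Rightarrow> 'a::field_char_0" and s :: nat
  assumes inj: "inj_on e {0..<r}"
    and z: "\<And>j. j < r \<Longrightarrow> (\<Sum>k<r. w k * (\<Prod>i<k. of_nat (e j + i * s))) = 0"
  shows "\<And>k. k < r \<Longrightarrow> w k = 0"
proof (rule ccontr)
  fix k0 assume k0: "k0 < r" "w k0 \<noteq> 0"
  define phi :: "nat \<Rightarrow> 'a poly" where "phi k = (\<Prod>i<k. [:of_nat (i * s), 1:])" for k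
  define Phi where "Phi = (\<Sum>k<r. smult (w k) (phi k))"
  have dphi: "degree (phi k) = k" for k
    unfolding phi_def by (subst degree_prod_eq_sum_degree) auto
  have lphi: "coeff (phi k) k = 1" for k
  proof -
    have "lead_coeff (phi k) = 1" unfolding phi_def by (simp add: lead_coeff_prod)
    thus ?thesis by (simp add: dphi)
  qed
  have pphi: "poly (phi k) (of_nat x) = (\<Prod>i<k. of_nat (x + i * s))" for k x
    unfolding phi_def by (simp add: poly_prod algebra_simps)
  define K where "K = {k. k < r \<and> w k \<noteq> 0}"
  have fK: "finite K" "K \<noteq> {}" using k0 unfolding K_def by auto
  define ks where "ks = Max K"
  have ks: "ks < r" "w ks \<noteq> 0" using Max_in[OF fK] unfolding ks_def K_def by auto
  have ksmax: "k < r \<Longrightarrow> w k \<noteq> 0 \<Longrightarrow> k \<le> ks" for k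
    using Max_ge[OF fK(1)] unfolding ks_def K_def by auto
  have "coeff Phi ks = (\<Sum>k<r. w k * coeff (phi k) ks)" unfolding Phi_def by (simp add: coeff_sum)
  also have "\<dots> = (\<Sum>k\<in>{ks}. w k * coeff (phi k) ks)"
  proof (rule sum.mono_neutral_right)
    show "\<forall>i\<in>{..<r} - {ks}. w i * coeff (phi i) ks = 0"
    proof
      fix i assume i: "i \<in> {..<r} - {ks}"
      show "w i * coeff (phi i) ks = 0"
      proof (cases "w i = 0")
        case False
        hence "i < ks" using ksmax i by force
        thus ?thesis using dphi[of i] by (simp add: coeff_eq_0)
      qed simp
    qed
  qed (use ks in auto)
  also have "\<dots> = w ks" using lphi by simp
  finally have "Phi \<noteq> 0" using ks by auto
  hence cb: "card {x. poly Phi x = 0} \<le> degree Phi" by (rule card_poly_roots_bound)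
  have "degree Phi \<le> r - 1" unfolding Phi_def
    by (rule degree_sum_le, simp, rule order.trans[OF degree_smult_le], use dphi in auto)
  moreover have "r - 1 < r" using k0 by simp
  moreover have "(\<lambda>j. of_nat (e j) :: 'a) ` {0..<r} \<subseteq> {x. poly Phi x = 0}"
    using z by (auto simp: Phi_def poly_sum pphi)
  moreover have "card ((\<lambda>j. of_nat (e j) :: 'a) ` {0..<r}) = r"
    by (subst card_image) (use inj in \<open>auto simp: inj_on_def\<close>)
  moreover have "finite {x. poly Phi x = 0}" using \<open>Phi \<noteq> 0\<close> by (rule poly_roots_finite)
  ultimately show False using cb by (metis card_mono not_le order.trans)
qed

lemma wronsk_distinct:
  fixes h :: "nat \<Rightarrow> 'a::field_char_0 poly" and q :: "'a poly"
  assumes q: "degree q \<ge> 1" and hnz: "\<And>j. j < r \<Longrightarrow> h j \<noteq> 0"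
    and inj: "inj_on (\<lambda>j. degree (h j)) {0..<r}"
  shows "det (mat r r (\<lambda>(k,j). (dlt q ^^ k) (h j))) \<noteq> 0"
proof
  assume D0: "det (mat r r (\<lambda>(k,j). (dlt q ^^ k) (h j))) = 0"
  define s where "s = degree q - 1"
  define M where "M = mat r r (\<lambda>(k,j). coeff ((dlt q ^^ k) (h j)) (degree (h j) + k * s))"
  have "coeff (det (mat r r (\<lambda>(k,j). (dlt q ^^ k) (h j)))) (sum (\<lambda>j. degree (h j)) {0..<r} + sum (\<lambda>k. k * s) {0..<r})
     = det M" unfolding M_def
    by (rule det_coeff_gen, unfold s_def, rule dlt_iter_degree[OF q])
  hence "det M = 0" using D0 by simp
  moreover have "M \<in> carrier_mat r r" by (simp add: M_def)
  ultimately have "det (transpose_mat M) = 0" by (simp add: det_transpose)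
  then obtain v where v: "v \<in> carrier_vec r" "v \<noteq> 0\<^sub>v r" "transpose_mat M *\<^sub>v v = 0\<^sub>v r"
    using det_0_iff_vec_prod_zero_field[of "transpose_mat M" r] by (auto simp: M_def)
  have Mjk: "M $$ (k, j) = lead_coeff (h j) * (lead_coeff q ^ k * (\<Prod>i<k. of_nat (degree (h j) + i * s)))"
    if "k < r" "j < r" for k j
    using that dlt_iter_coeff[OF q order.refl, of k "h j"] by (simp add: M_def s_def)
  have "(\<Sum>k<r. (v $ k * lead_coeff q ^ k) * (\<Prod>i<k. of_nat (degree (h j) + i * s))) = 0" if j: "j < r" for j
  proof -
    have "0 = (transpose_mat M *\<^sub>v v) $ j" by (subst v(3)) (use j in simp)
    also have "\<dots> = (\<Sum>k<r. M $$ (k, j) * v $ k)"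
      using v(1) j by (simp add: scalar_prod_def M_def lessThan_atLeast0)
    also have "\<dots> = lead_coeff (h j) * (\<Sum>k<r. (v $ k * lead_coeff q ^ k) * (\<Prod>i<k. of_nat (degree (h j) + i * s)))"
      by (simp add: Mjk j sum_distrib_left algebra_simps)
    finally show ?thesis using hnz[OF j] by simp
  qed
  from vand_lemma[of "\<lambda>j. degree (h j)" r, OF inj this]
  have vz: "\<And>k. k < r \<Longrightarrow> v $ k * lead_coeff q ^ k = 0" by simp
  have "q \<noteq> 0" using q by auto
  hence "\<And>k. k < r \<Longrightarrow> v $ k = 0" using vz by simp
  hence "v = 0\<^sub>v r" using v(1) by (intro eq_vecI) auto
  with v(2) show False by simp
qed

lemma smult_sum_right: "smult a (\<Sum>i\<in>S. f i) = (\<Sum>i\<in>S. smult a (f i))"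
  by (induction S rule: infinite_finite_induct) (auto simp: smult_add_right)

lemma degree_diff_lc_less:
  fixes p q :: "'a::field poly"
  assumes "degree p = degree q" "lead_coeff p = lead_coeff q" "p - q \<noteq> 0"
  shows "degree (p - q) < degree p"
proof -
  have "degree (p - q) \<le> degree p" using degree_diff_le_max[of p q] assms by simp
  moreover have "coeff (p - q) (degree p) = 0" using assms by simp
  moreover have "coeff (p - q) (degree (p - q)) \<noteq> 0" using assms(3) leading_coeff_neq_0 by blast
  ultimately show ?thesis by (metis le_neq_implies_less)
qed

lemma reduce_lemma:
  fixes h :: "nat \<Rightarrow> 'a::field poly"
  assumes hnz: "\<And>i. i < r \<Longrightarrow> h i \<noteq> 0"
  shows "\<exists>d. p - (\<Sum>i<r. smult (d i) (h i)) = 0 \<or>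
     (\<forall>i<r. degree (p - (\<Sum>i<r. smult (d i) (h i))) \<noteq> degree (h i))"
proof (induction "degree p" arbitrary: p rule: less_induct)
  case less
  show ?case
  proof (cases "p = 0 \<or> (\<forall>i<r. degree p \<noteq> degree (h i))")
    case True
    thus ?thesis by (intro exI[of _ "\<lambda>_. 0"]) auto
  next
    case False
    then obtain i0 where i0: "i0 < r" "degree p = degree (h i0)" and p0: "p \<noteq> 0" by auto
    define c where "c = lead_coeff p / lead_coeff (h i0)"
    define p1 where "p1 = p - smult c (h i0)"
    have hi0: "h i0 \<noteq> 0" using hnz i0 by auto
    have lc: "lead_coeff (smult c (h i0)) = lead_coeff p" "degree (smult c (h i0)) = degree p"
      using hi0 p0 i0 by (auto simp: c_def) (metis leading_coeff_0_iff)
    have sum_split: "(\<Sum>i<r. smult (d i + (if i = i0 then c else 0)) (h i))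
       = (\<Sum>i<r. smult (d i) (h i)) + smult c (h i0)" for d
    proof -
      have "(\<Sum>i<r. smult (d i + (if i = i0 then c else 0)) (h i))
          = (\<Sum>i<r. smult (d i) (h i)) + (\<Sum>i<r. smult (if i = i0 then c else 0) (h i))"
        by (simp add: smult_add_left sum.distrib)
      also have "(\<Sum>i<r. smult (if i = i0 then c else 0) (h i)) = smult c (h i0)"
        using i0 by (simp add: if_distrib[of "\<lambda>x. smult x _"] sum.delta cong: if_cong)
      finally show ?thesis .
    qed
    show ?thesis
    proof (cases "p1 = 0")
      case True
      show ?thesis
        by (rule exI[of _ "\<lambda>i. 0 + (if i = i0 then c else 0)"], unfold sum_split)
           (use True in \<open>simp add: p1_def\<close>)
    next
      case False
      hence "degree p1 < degree p" unfolding p1_def using degree_diff_lc_less[of p "smult c (h i0)"] lc by simp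
      from less[OF this] obtain d where d: "p1 - (\<Sum>i<r. smult (d i) (h i)) = 0 \<or>
        (\<forall>i<r. degree (p1 - (\<Sum>i<r. smult (d i) (h i))) \<noteq> degree (h i))" by blast
      have eq: "p - (\<Sum>i<r. smult (d i + (if i = i0 then c else 0)) (h i)) = p1 - (\<Sum>i<r. smult (d i) (h i))"
        unfolding sum_split p1_def by simp
      show ?thesis by (rule exI[of _ "\<lambda>i. d i + (if i = i0 then c else 0)"], unfold eq, rule d)
    qed
  qed
qed

lemma indep_distinct:
  fixes g :: "nat \<Rightarrow> 'a::field poly"
  assumes "\<And>c. (\<Sum>j<r. smult (c j) (g j)) = 0 \<Longrightarrow> (\<forall>j<r. c j = 0)"
  shows "\<exists>h C. (\<forall>i<r. h i \<noteq> 0) \<and> inj_on (\<lambda>i. degree (h i)) {0..<r}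
            \<and> (\<forall>i<r. h i = (\<Sum>j<r. smult (C i j) (g j)))"
  using assms
proof (induction r)
  case 0 thus ?case by auto
next
  case (Suc r)
  have ind: "\<forall>j<r. c j = 0" if c: "(\<Sum>j<r. smult (c j) (g j)) = 0" for c
  proof (intro allI impI)
    fix j assume j: "j < r"
    have "(\<Sum>j<r. smult ((c(r := 0)) j) (g j)) = (\<Sum>j<r. smult (c j) (g j))"
      by (rule sum.cong) auto
    hence "(\<Sum>j<Suc r. smult ((c(r := 0)) j) (g j)) = 0"
      using c by (simp add: lessThan_Suc)
    hence all: "\<forall>j<Suc r. (c(r := 0)) j = 0" by (rule Suc.prems)
    have "(c(r := 0)) j = 0" using all j by (meson less_SucI)
    thus "c j = 0" using j by simp
  qed
  from Suc.IH[OF ind] obtain h C where hC: "\<forall>i<r. h i \<noteq> 0" "inj_on (\<lambda>i. degree (h i)) {0..<r}"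
    "\<forall>i<r. h i = (\<Sum>j<r. smult (C i j) (g j))" by blast
  from reduce_lemma[of r h "g r"] hC(1) obtain d where d:
    "g r - (\<Sum>i<r. smult (d i) (h i)) = 0 \<or>
     (\<forall>i<r. degree (g r - (\<Sum>i<r. smult (d i) (h i))) \<noteq> degree (h i))" by blast
  define hr where "hr = g r - (\<Sum>i<r. smult (d i) (h i))"
  define S where "S j = (\<Sum>i<r. d i * C i j)" for j
  define Cr where "Cr j = (if j = r then 1 else - S j)" for j
  have "(\<Sum>i<r. smult (d i) (h i)) = (\<Sum>i<r. smult (d i) (\<Sum>j<r. smult (C i j) (g j)))"
    by (rule sum.cong) (use hC(3) in auto)
  also have "\<dots> = (\<Sum>i<r. \<Sum>j<r. smult (d i * C i j) (g j))"
    by (simp only: smult_sum_right smult_smult)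
  also have "\<dots> = (\<Sum>j<r. \<Sum>i<r. smult (d i * C i j) (g j))"
    by (rule sum.swap)
  also have "\<dots> = (\<Sum>j<r. smult (S j) (g j))"
    by (simp only: S_def smult_sum)
  finally have X: "(\<Sum>i<r. smult (d i) (h i)) = (\<Sum>j<r. smult (S j) (g j))" .
  have Y: "(\<Sum>j<r. smult (Cr j) (g j)) = (\<Sum>j<r. - smult (S j) (g j))"
    by (rule sum.cong) (auto simp: Cr_def)
  have Z: "(\<Sum>j<r. - smult (S j) (g j)) = - (\<Sum>j<r. smult (S j) (g j))" by (rule sum_negf)
  have "(\<Sum>j<Suc r. smult (Cr j) (g j)) = (\<Sum>j<r. smult (Cr j) (g j)) + smult (Cr r) (g r)"
    by (rule sum.lessThan_Suc)
  also have "\<dots> = - (\<Sum>j<r. smult (S j) (g j)) + g r" unfolding Y Z by (simp add: Cr_def)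
  also have "\<dots> = hr" unfolding hr_def X by simp
  finally have hr_eq: "hr = (\<Sum>j<Suc r. smult (Cr j) (g j))" by simp
  have hr0: "hr \<noteq> 0"
  proof
    assume "hr = 0"
    hence "(\<Sum>j<Suc r. smult (Cr j) (g j)) = 0" using hr_eq by simp
    hence "\<forall>j<Suc r. Cr j = 0" by (rule Suc.prems)
    hence "Cr r = 0" by simp
    thus False by (simp add: Cr_def)
  qed
  define h' where "h' = h(r := hr)"
  define C' where "C' i j = (if i = r then Cr j else if j = r then 0 else C i j)" for i j
  show ?case
  proof (intro exI[of _ h'] exI[of _ C'] conjI allI impI)
    fix i assume "i < Suc r"
    thus "h' i \<noteq> 0" using hC(1) hr0 by (auto simp: h'_def less_Suc_eq)
  next
    fix i assume i: "i < Suc r"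
    show "h' i = (\<Sum>j<Suc r. smult (C' i j) (g j))"
    proof (cases "i = r")
      case True thus ?thesis using hr_eq by (simp add: h'_def C'_def)
    next
      case False
      hence ir: "i < r" using i by simp
      have "(\<Sum>j<r. smult (C' i j) (g j)) = (\<Sum>j<r. smult (C i j) (g j))"
        by (rule sum.cong) (use False in \<open>auto simp: C'_def\<close>)
      hence "(\<Sum>j<Suc r. smult (C' i j) (g j)) = (\<Sum>j<r. smult (C i j) (g j))"
        using False by (simp add: C'_def lessThan_Suc)
      thus ?thesis using hC(3) ir False by (simp add: h'_def)
    qed
  next
    have deg: "degree hr \<noteq> degree (h i)" if "i < r" for i
      using d hr0 that unfolding hr_def by auto
    have "inj_on (\<lambda>i. degree (h' i)) {0..<r}"
      using hC(2) by (auto simp: h'_def inj_on_def)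
    moreover have "degree (h' r) \<notin> (\<lambda>i. degree (h' i)) ` {0..<r}"
    proof
      assume "degree (h' r) \<in> (\<lambda>i. degree (h' i)) ` {0..<r}"
      then obtain i where i: "i < r" "degree (h' r) = degree (h' i)" by auto
      hence "degree hr = degree (h i)" by (simp add: h'_def)
      with deg[OF i(1)] show False by simp
    qed
    moreover have "{0..<Suc r} = insert r {0..<r}" by auto
    ultimately show "inj_on (\<lambda>i. degree (h' i)) {0..<Suc r}"
      by simp
  qed
qed

lemma wronsk_indep:
  fixes g :: "nat \<Rightarrow> 'a::field_char_0 poly" and q :: "'a poly"
  assumes q: "degree q \<ge> 1"
    and indep: "\<And>c. (\<Sum>j<r. smult (c j) (g j)) = 0 \<Longrightarrow> (\<forall>j<r. c j = 0)"
  shows "det (mat r r (\<lambda>(k,j). (dlt q ^^ k) (g j))) \<noteq> 0"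
proof -
  obtain h C where hC: "\<forall>i<r. h i \<noteq> 0" "inj_on (\<lambda>i. degree (h i)) {0..<r}"
    "\<forall>i<r. h i = (\<Sum>j<r. smult (C i j) (g j))" using indep_distinct[OF indep] by blast
  define Wg where "Wg = mat r r (\<lambda>(k,j). (dlt q ^^ k) (g j))"
  define Cm where "Cm = mat r r (\<lambda>(j,i). [:C i j:])"
  have "mat r r (\<lambda>(k,j). (dlt q ^^ k) (h j)) = Wg * Cm"
  proof (rule eq_matI)
    fix k i assume ki: "k < dim_row (Wg * Cm)" "i < dim_col (Wg * Cm)"
    hence k: "k < r" and i: "i < r" by (auto simp: Wg_def Cm_def)
    have "(Wg * Cm) $$ (k, i) = (\<Sum>j = 0..<r. (dlt q ^^ k) (g j) * [:C i j:])"
      using k i by (simp add: Wg_def Cm_def scalar_prod_def)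
    also have "\<dots> = (\<Sum>j<r. smult (C i j) ((dlt q ^^ k) (g j)))"
      by (simp add: lessThan_atLeast0 mult.commute)
    also have "\<dots> = (dlt q ^^ k) (h i)" using hC(3) i by (simp add: dlt_iter_sum)
    finally show "mat r r (\<lambda>(k,j). (dlt q ^^ k) (h j)) $$ (k, i) = (Wg * Cm) $$ (k, i)"
      using k i by simp
  qed (auto simp: Wg_def Cm_def)
  moreover have "det (Wg * Cm) = det Wg * det Cm"
    by (rule det_mult[of Wg r Cm]) (auto simp: Wg_def Cm_def)
  ultimately have "det (mat r r (\<lambda>(k,j). (dlt q ^^ k) (h j))) = det Wg * det Cm" by simp
  moreover have "det (mat r r (\<lambda>(k,j). (dlt q ^^ k) (h j))) \<noteq> 0"
    by (rule wronsk_distinct[OF q]) (use hC in auto)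
  ultimately show ?thesis unfolding Wg_def by auto
qed


lemma irr_degree:
  fixes F :: "'a::field poly"
  assumes "irreducible F" shows "degree F \<ge> 1"
proof (rule ccontr)
  assume "\<not> degree F \<ge> 1"
  hence "degree F = 0" by simp
  moreover have "F \<noteq> 0" using assms by auto
  ultimately have "is_unit F" by (simp add: is_unit_iff_degree)
  thus False using assms by auto
qed

lemma pow_dvd_bound:
  fixes F x :: "'a::field poly"
  assumes "irreducible F" "x \<noteq> 0" "F ^ k dvd x"
  shows "k \<le> degree x"
proof -
  have "degree (F ^ k) \<le> degree x" using assms(3,2) by (rule dvd_imp_degree_le)
  moreover have "F \<noteq> 0" using assms by auto
  ultimately have "k * degree F \<le> degree x" by (simp add: degree_power_eq)
  moreover have "degree F \<ge> 1" using irr_degree[OF assms(1)] .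
  ultimately show ?thesis by (metis le_trans mult.right_neutral mult_le_mono2)
qed

lemma mult_poly_dvd:
  fixes F x :: "'a::field poly"
  assumes "irreducible F" "x \<noteq> 0"
  shows "F ^ mult_poly F x dvd x"
  unfolding mult_poly_def
  by (rule GreatestI_nat[of _ 0 "degree x"]) (use pow_dvd_bound[OF assms] in auto)

lemma mult_poly_ge:
  fixes F x :: "'a::field poly"
  assumes "irreducible F" "x \<noteq> 0" "F ^ k dvd x"
  shows "k \<le> mult_poly F x"
  unfolding mult_poly_def
  by (rule Greatest_le_nat[of _ k "degree x"]) (use pow_dvd_bound[OF assms(1,2)] assms(3) in auto)

lemma mult_poly_not_dvd:
  fixes F x :: "'a::field poly"
  assumes "irreducible F" "x \<noteq> 0"
  obtains x' where "x = F ^ mult_poly F x * x'" "\<not> F dvd x'"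
proof -
  define k where "k = mult_poly F x"
  obtain x' where x': "x = F ^ k * x'" using mult_poly_dvd[OF assms] unfolding k_def by (auto elim: dvdE)
  have "\<not> F dvd x'"
  proof
    assume "F dvd x'"
    hence "F ^ k * F dvd F ^ k * x'" by (rule mult_dvd_mono[OF dvd_refl])
    hence "F ^ Suc k dvd x" using x' by (simp add: mult.commute)
    from mult_poly_ge[OF assms this] show False by (simp add: k_def)
  qed
  with x' that show ?thesis unfolding k_def by blast
qed

lemma mult_poly_mult:
  fixes F x y :: "'a::field poly"
  assumes F: "irreducible F" and x: "x \<noteq> 0" and y: "y \<noteq> 0"
  shows "mult_poly F (x * y) = mult_poly F x + mult_poly F y"
proof -
  define a where "a = mult_poly F x"
  define b where "b = mult_poly F y"
  have xy: "x * y \<noteq> 0" using x y by simp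
  obtain x' where x': "x = F ^ a * x'" "\<not> F dvd x'" using mult_poly_not_dvd[OF F x] unfolding a_def .
  obtain y' where y': "y = F ^ b * y'" "\<not> F dvd y'" using mult_poly_not_dvd[OF F y] unfolding b_def .
  have Fp: "prime_elem F" using F by (rule field_poly_irreducible_imp_prime)
  have F0: "F \<noteq> 0" using F by auto
  have "mult_poly F (x * y) \<le> a + b"
  proof (rule ccontr)
    assume "\<not> ?thesis"
    hence "Suc (a + b) \<le> mult_poly F (x * y)" by simp
    hence "F ^ Suc (a + b) dvd x * y"
      using mult_poly_dvd[OF F xy] by (meson dvd_trans le_imp_power_dvd)
    moreover have "x * y = F ^ (a + b) * (x' * y')" using x'(1) y'(1) by (simp add: power_add algebra_simps)
    ultimately have "F ^ (a + b) * F dvd F ^ (a + b) * (x' * y')" by (simp add: mult.commute)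
    hence "F dvd x' * y'" using F0 by (subst (asm) dvd_times_left_cancel_iff) auto
    thus False using Fp x'(2) y'(2) by (simp add: prime_elem_dvd_mult_iff)
  qed
  moreover have "a + b \<le> mult_poly F (x * y)"
    by (rule mult_poly_ge[OF F xy])
       (simp add: a_def b_def power_add mult_dvd_mono mult_poly_dvd[OF F x] mult_poly_dvd[OF F y])
  ultimately show ?thesis by (simp add: a_def b_def)
qed

lemma mult_poly_const:
  fixes F :: "'a::field poly"
  assumes F: "irreducible F" and c: "c \<noteq> 0"
  shows "mult_poly F [:c:] = 0"
proof -
  have c0: "[:c:] \<noteq> 0" using c by simp
  have "mult_poly F [:c:] \<le> degree [:c:]"
    by (rule pow_dvd_bound[OF F c0 mult_poly_dvd[OF F c0]])
  thus ?thesis by simp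
qed

lemma mult_poly_prod:
  fixes F :: "'a::field poly"
  assumes F: "irreducible F" and "finite S" and "\<And>i. i \<in> S \<Longrightarrow> f i \<noteq> 0"
  shows "mult_poly F (prod f S) = (\<Sum>i\<in>S. mult_poly F (f i))"
  using assms(2,3)
proof (induction S rule: finite_induct)
  case empty
  have "mult_poly F [:1:] = 0" by (rule mult_poly_const[OF F]) simp
  thus ?case by (simp add: one_pCons)
next
  case (insert x S)
  thus ?case by (simp add: mult_poly_mult[OF F])
qed

lemma mult_poly_power:
  fixes F :: "'a::field poly"
  assumes F: "irreducible F" and "x \<noteq> 0"
  shows "mult_poly F (x ^ n) = n * mult_poly F x"
  by (induction n) (use assms mult_poly_const[OF F, of 1] in \<open>simp_all add: mult_poly_mult one_pCons\<close>)


lemma sum_k_choose2: "(\<Sum>k=0..<r. k) = r choose 2"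
proof (induction r)
  case 0 thus ?case by simp
next
  case (Suc r)
  have "Suc r choose 2 = (r choose 1) + (r choose 2)"
    using binomial_Suc_Suc[of r 1] by (simp add: numeral_2_eq_2)
  thus ?case using Suc by simp
qed

lemma sum_k_mult: "(\<Sum>k=0..<r. k * c) = (r choose 2) * (c::nat)"
proof -
  have "(\<Sum>k=0..<r. k * c) = (\<Sum>k=0..<r. k) * c" by (rule sum_distrib_right[symmetric])
  thus ?thesis by (simp only: sum_k_choose2)
qed

lemma wronsk_bound:
  fixes F L P :: "'a::field_char_0 poly" and G :: "nat \<Rightarrow> 'a poly" and B :: "nat \<Rightarrow> 'a"
  assumes Firr: "irreducible F" and FL: "F ^ mu dvd L" and L0: "L \<noteq> 0"
    and indep: "\<And>c. (\<Sum>j<r. smult (c j) (G j)) = 0 \<Longrightarrow> (\<forall>j<r. c j = 0)"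
    and Gd: "\<And>i. i < r \<Longrightarrow> G i dvd L * pderiv (G i)"
    and G0: "\<And>i. i < r \<Longrightarrow> G i \<noteq> 0"
    and P: "P = (\<Sum>i<r. smult (B i) (G i))" and i0: "i0 < r" "B i0 \<noteq> 0" and P0: "P \<noteq> 0"
  shows "degree F * (mult_poly F P + mu * (r choose 2))
     \<le> degree F * mult_poly F (G i0) + (r choose 2) * (degree F + degree L - 1)"
proof -
  have F0: "F \<noteq> 0" using Firr by auto
  have dF: "degree F \<ge> 1" using irr_degree[OF Firr] .
  define q where "q = F * L"
  have dq: "degree q = degree F + degree L" using F0 L0 by (simp add: q_def degree_mult_eq)
  hence q1: "degree q \<ge> 1" using dF by simp
  define W where "W = mat r r (\<lambda>(k,j). (dlt q ^^ k) (G j))"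
  have W: "W \<in> carrier_mat r r" by (simp add: W_def)
  have dW: "det W \<noteq> 0" unfolding W_def by (rule wronsk_indep[OF q1 indep])
  define x where "x = vec r (\<lambda>i. [:B i:])"
  define V where "V j = (if j = i0 then P else G j)" for j
  have rc: "replace_col W (W *\<^sub>v x) i0 = mat r r (\<lambda>(k,j). (dlt q ^^ k) (V j))"
  proof (rule eq_matI)
    fix k j assume "k < dim_row (mat r r (\<lambda>(k,j). (dlt q ^^ k) (V j)))" "j < dim_col (mat r r (\<lambda>(k,j). (dlt q ^^ k) (V j)))"
    hence k: "k < r" and j: "j < r" by auto
    have "(W *\<^sub>v x) $ k = (\<Sum>i = 0..<r. (dlt q ^^ k) (G i) * [:B i:])"
      using k by (simp add: W_def x_def scalar_prod_def)
    also have "\<dots> = (\<Sum>i<r. smult (B i) ((dlt q ^^ k) (G i)))"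
      by (simp add: lessThan_atLeast0 mult.commute)
    also have "\<dots> = (dlt q ^^ k) P" unfolding P by (simp add: dlt_iter_sum)
    finally show "replace_col W (W *\<^sub>v x) i0 $$ (k, j) = mat r r (\<lambda>(k,j). (dlt q ^^ k) (V j)) $$ (k, j)"
      using k j by (simp add: replace_col_def W_def V_def)
  qed (auto simp: replace_col_def W_def)
  have cr: "det (replace_col W (W *\<^sub>v x) i0) = [:B i0:] * det W"
    using cramer_lemma_mat[OF W _ i0(1), of x] i0 by (simp add: x_def)
  define m where "m j = (if j = i0 then mult_poly F P else mult_poly F (G j))" for j
  have "F ^ (sum m {0..<r} + sum (\<lambda>k. k * mu) {0..<r}) dvd det (mat r r (\<lambda>(k,j). (dlt q ^^ k) (V j)))"
  proof (rule det_dvd_gen)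
    fix k j assume "k < r" "j < r"
    hence "F ^ m j dvd V j" using P0 G0 by (simp add: m_def V_def mult_poly_dvd[OF Firr])
    from dlt_iter_dvd[OF FL this, of k] show "F ^ (m j + k * mu) dvd (dlt q ^^ k) (V j)"
      by (simp add: q_def)
  qed
  hence dv1: "F ^ (sum m {0..<r} + mu * (r choose 2)) dvd [:B i0:] * det W"
    unfolding rc[symmetric] cr sum_k_mult by (simp only: mult.commute)
  have "prod G {0..<r} dvd det W" unfolding W_def
    by (rule det_prod_dvd_gen, unfold q_def, rule dlt_iter_self_dvd, rule Gd)
  then obtain Qd where Qd: "det W = prod G {0..<r} * Qd" by (auto elim: dvdE)
  have PG0: "prod G {0..<r} \<noteq> 0" using G0 by auto
  have Qd0: "Qd \<noteq> 0" using dW Qd by auto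
  have "degree (det W) \<le> sum (\<lambda>j. degree (G j)) {0..<r} + sum (\<lambda>k. k * (degree q - 1)) {0..<r}"
    unfolding W_def by (rule det_degree_gen, rule dlt_iter_degree[OF q1])
  moreover have "degree (det W) = sum (\<lambda>j. degree (G j)) {0..<r} + degree Qd"
    using Qd PG0 Qd0 G0 by (simp add: degree_mult_eq degree_prod_eq_sum_degree)
  ultimately have dQ: "degree Qd \<le> (r choose 2) * (degree q - 1)"
    unfolding sum_k_mult by linarith
  have B0: "[:B i0:] \<noteq> 0" using i0 by simp
  have "mult_poly F ([:B i0:] * det W) = mult_poly F [:B i0:] + mult_poly F (prod G {0..<r} * Qd)"
    unfolding Qd by (rule mult_poly_mult[OF Firr B0]) (use PG0 Qd0 in simp)
  also have "\<dots> = mult_poly F (prod G {0..<r}) + mult_poly F Qd"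
    using mult_poly_const[OF Firr i0(2)] mult_poly_mult[OF Firr PG0 Qd0] by simp
  finally have "mult_poly F ([:B i0:] * det W) = mult_poly F (prod G {0..<r}) + mult_poly F Qd" .
  also have "mult_poly F (prod G {0..<r}) = (\<Sum>j=0..<r. mult_poly F (G j))"
    using G0 by (intro mult_poly_prod[OF Firr]) auto
  finally have mm: "mult_poly F ([:B i0:] * det W) = (\<Sum>j=0..<r. mult_poly F (G j)) + mult_poly F Qd" .
  have "sum m {0..<r} + mu * (r choose 2) \<le> mult_poly F ([:B i0:] * det W)"
    using dv1 i0 dW by (intro mult_poly_ge[OF Firr]) auto
  moreover have "sum m {0..<r} = mult_poly F P + (\<Sum>j\<in>{0..<r} - {i0}. mult_poly F (G j))"
    using i0 by (simp add: sum.remove[of "{0..<r}" i0] m_def)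
  moreover have "(\<Sum>j=0..<r. mult_poly F (G j)) = mult_poly F (G i0) + (\<Sum>j\<in>{0..<r} - {i0}. mult_poly F (G j))"
    using i0 by (simp add: sum.remove[of "{0..<r}" i0])
  ultimately have ineq: "mult_poly F P + mu * (r choose 2) \<le> mult_poly F (G i0) + mult_poly F Qd"
    using mm by linarith
  have "F ^ mult_poly F Qd dvd Qd" by (rule mult_poly_dvd[OF Firr Qd0])
  hence "degree (F ^ mult_poly F Qd) \<le> degree Qd" using Qd0 by (rule dvd_imp_degree_le)
  hence "degree F * mult_poly F Qd \<le> (r choose 2) * (degree q - 1)"
    using dQ by (simp add: degree_power_eq F0 mult.commute)
  note tQ = this
  have "degree F * (mult_poly F P + mu * (r choose 2)) \<le> degree F * (mult_poly F (G i0) + mult_poly F Qd)"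
    using ineq by (rule mult_le_mono2)
  also have "\<dots> = degree F * mult_poly F (G i0) + degree F * mult_poly F Qd" by (rule distrib_left)
  also have "\<dots> \<le> degree F * mult_poly F (G i0) + (r choose 2) * (degree q - 1)" using tQ by (rule add_left_mono)
  finally show ?thesis using dq by simp
qed


lemma prod_pow_dvd_pderiv:
  fixes f :: "nat \<Rightarrow> 'a::field poly"
  assumes "finite S" "\<And>i. i \<in> S \<Longrightarrow> f i dvd L"
  shows "(\<Prod>i\<in>S. f i ^ a i) dvd L * pderiv (\<Prod>i\<in>S. f i ^ a i)"
  using assms
proof (induction S rule: finite_induct)
  case empty thus ?case by simp
next
  case (insert x S)
  define X where "X = f x ^ a x"
  define Y where "Y = (\<Prod>i\<in>S. f i ^ a i)"
  have Y: "Y dvd L * pderiv Y" using insert unfolding Y_def by auto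
  have X: "X dvd L * pderiv X"
  proof (cases "a x")
    case 0 thus ?thesis by (simp add: X_def)
  next
    case (Suc b)
    have "f x dvd L" using insert by auto
    hence "f x * f x ^ b dvd L * (f x ^ b * pderiv (f x))" by (intro mult_dvd_mono) auto
    hence "f x ^ Suc b dvd L * (f x ^ b * pderiv (f x))" by simp
    hence "f x ^ Suc b dvd smult (of_nat (Suc b)) (L * (f x ^ b * pderiv (f x)))" by (rule dvd_smult)
    moreover have "L * pderiv (f x ^ Suc b) = smult (of_nat (Suc b)) (L * (f x ^ b * pderiv (f x)))"
      by (simp only: pderiv_power_Suc mult_smult_left mult_smult_right)
    ultimately show ?thesis by (simp only: X_def Suc)
  qed
  have 1: "X * Y dvd X * (L * pderiv Y)" by (rule mult_dvd_mono[OF dvd_refl Y])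
  have "Y * X dvd Y * (L * pderiv X)" by (rule mult_dvd_mono[OF dvd_refl X])
  hence 2: "X * Y dvd Y * (L * pderiv X)" by (simp only: mult.commute)
  have "X * Y dvd X * (L * pderiv Y) + Y * (L * pderiv X)" by (rule dvd_add[OF 1 2])
  hence "X * Y dvd L * pderiv (X * Y)" by (simp add: pderiv_mult algebra_simps)
  thus ?case using insert by (simp add: X_def Y_def)
qed

theorem theorem2p6:
  fixes f :: "nat \<Rightarrow> 'a::field_char_0 poly"
    and alpha :: "nat \<Rightarrow> nat \<Rightarrow> nat"
    and a :: "nat \<Rightarrow> 'a"
    and m l :: nat
    and F P :: "'a poly"
  assumes f_nz: "\<And>i. i \<in> {1..m} \<Longrightarrow> f i \<noteq> 0"
    and P_def: "P = (\<Sum>j=1..l. smult (a j) (\<Prod>i=1..m. f i ^ alpha i j))"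
    and F_irr: "irreducible F"
    and P_nz: "P \<noteq> 0"
  shows "int (mult_poly F P) \<le>
    Max ((\<lambda>j. \<Sum>i=1..m. int (mult_poly F (f i)) * int (alpha i j)
               + (int (degree (f i)) - int (mult_poly F (f i))) * int ((l + 1 - j) choose 2)) ` {1..l})"
proof -
  define g where "g j = (\<Prod>i=1..m. f i ^ alpha i j)" for j
  define L where "L = (\<Prod>i=1..m. f i)"
  define mu where "mu = (\<Sum>i=1..m. mult_poly F (f i))"
  define D where "D = (\<Sum>i=1..m. degree (f i))"
  define n where "n = mult_poly F P"
  define tm where "tm j = (\<Sum>i=1..m. int (mult_poly F (f i)) * int (alpha i j)
               + (int (degree (f i)) - int (mult_poly F (f i))) * int ((l + 1 - j) choose 2))" for j
  have g0: "g j \<noteq> 0" for j using f_nz by (auto simp: g_def)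
  have L0: "L \<noteq> 0" using f_nz by (auto simp: L_def)
  have mL: "mult_poly F L = mu" unfolding L_def mu_def using f_nz by (intro mult_poly_prod[OF F_irr]) auto
  have FL: "F ^ mu dvd L" using mult_poly_dvd[OF F_irr L0] mL by simp
  have dL: "degree L = D" unfolding L_def D_def using f_nz by (intro degree_prod_eq_sum_degree) auto
  have mg: "mult_poly F (g j) = (\<Sum>i=1..m. alpha i j * mult_poly F (f i))" for j
    unfolding g_def using f_nz
    by (subst mult_poly_prod[OF F_irr]) (auto simp: mult_poly_power[OF F_irr])
  have gd: "g j dvd L * pderiv (g j)" for j
    unfolding g_def L_def by (rule prod_pow_dvd_pderiv) (auto intro: dvd_prodI)
  have mud: "mult_poly F (f i) \<le> degree (f i)" if "i \<in> {1..m}" for i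
    using pow_dvd_bound[OF F_irr f_nz[OF that] mult_poly_dvd[OF F_irr f_nz[OF that]]] .
  have P': "P = (\<Sum>j\<in>{1..l}. smult (a j) (g j))" unfolding P_def g_def by simp
  have l1: "{1..l} \<noteq> {}"
  proof
    assume "{1..l} = {}"
    hence "P = 0" unfolding P' by (simp only: sum.empty)
    thus False using P_nz by simp
  qed
  have termj: "tm j = int (mult_poly F (g j)) + (int D - int mu) * int ((l + 1 - j) choose 2)" for j
  proof -
    have "tm j = (\<Sum>i=1..m. int (mult_poly F (f i)) * int (alpha i j))
        + (\<Sum>i=1..m. int (degree (f i)) - int (mult_poly F (f i))) * int ((l + 1 - j) choose 2)"
      unfolding tm_def by (simp only: sum.distrib sum_distrib_right)
    moreover have "(\<Sum>i=1..m. int (mult_poly F (f i)) * int (alpha i j)) = int (mult_poly F (g j))"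
      unfolding mg of_nat_sum of_nat_mult by (simp only: mult.commute)
    moreover have "(\<Sum>i=1..m. int (degree (f i)) - int (mult_poly F (f i))) = int D - int mu"
      unfolding D_def mu_def of_nat_sum by (rule sum_subtractf)
    ultimately show ?thesis by simp
  qed
  have key: "\<exists>j0\<in>{1..l}. int n \<le> tm j0"
  proof (cases "D = 0")
    case True
    hence df: "degree (f i) = 0" if "i \<in> {1..m}" for i using that by (auto simp: D_def)
    have dg: "degree (g j) = 0" for j
    proof -
      have "degree (g j) \<le> (\<Sum>i=1..m. degree (f i ^ alpha i j))"
        unfolding g_def using degree_prod_sum_le[of "{1..m}" "\<lambda>i. f i ^ alpha i j"] by (simp add: o_def)
      also have "\<dots> \<le> (\<Sum>i=1..m. degree (f i) * alpha i j)"
        by (rule sum_mono) (rule degree_power_le)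
      also have "\<dots> = 0" using df by simp
      finally show ?thesis by simp
    qed
    have "degree P \<le> 0" unfolding P'
    proof (rule degree_sum_le)
      fix j show "degree (smult (a j) (g j)) \<le> 0" using degree_smult_le[of "a j" "g j"] dg[of j] by simp
    qed simp
    hence "degree P = 0" by simp
    hence "n = 0" using pow_dvd_bound[OF F_irr P_nz mult_poly_dvd[OF F_irr P_nz]] by (simp add: n_def)
    moreover have "tm 1 \<ge> 0" unfolding tm_def using mud by (intro sum_nonneg) auto
    ultimately show ?thesis using l1 by (intro bexI[of _ 1]) auto
  next
    case False
    define R where "R = {S. S \<subseteq> {1..l} \<and> (\<exists>b. P = (\<Sum>j\<in>S. smult (b j) (g j)))}"
    have full: "{1..l} \<in> R" using P' by (auto simp: R_def)
    define k where "k = (LEAST k. \<exists>S\<in>R. card S = k)"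
    have "\<exists>S\<in>R. card S = k" unfolding k_def by (rule LeastI_ex) (use full in blast)
    then obtain S0 where S0R: "S0 \<in> R" and cS0: "card S0 = k" by blast
    have minc: "card S0 \<le> card S" if "S \<in> R" for S
      unfolding cS0 k_def by (rule Least_le) (use that in blast)
    from S0R have S0: "S0 \<subseteq> {1..l}" by (auto simp: R_def)
    from S0R obtain b where Pb: "P = (\<Sum>j\<in>S0. smult (b j) (g j))" by (auto simp: R_def)
    have fS0: "finite S0" using S0 finite_subset by blast
    have smaller: False if j: "j \<in> S0" and bb: "P = (\<Sum>j'\<in>S0. smult (bb j') (g j'))" and bj: "bb j = 0" for j bb
    proof -
      have "(\<Sum>j'\<in>S0. smult (bb j') (g j')) = smult (bb j) (g j) + (\<Sum>j'\<in>S0 - {j}. smult (bb j') (g j'))"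
        by (rule sum.remove[OF fS0 j])
      hence "P = (\<Sum>j'\<in>S0 - {j}. smult (bb j') (g j'))" using bb bj by simp
      hence "S0 - {j} \<in> R" using S0 by (auto simp: R_def)
      hence "card S0 \<le> card (S0 - {j})" by (rule minc)
      moreover have "card (S0 - {j}) < card S0" using fS0 j by (rule card_Diff1_less)
      ultimately show False by simp
    qed
    have bnz: "b j \<noteq> 0" if "j \<in> S0" for j using smaller[OF that Pb] by blast
    have indS: "\<forall>j\<in>S0. c j = 0" if c: "(\<Sum>j\<in>S0. smult (c j) (g j)) = 0" for c
    proof (rule ccontr)
      assume "\<not> ?thesis"
      then obtain j1 where j1: "j1 \<in> S0" "c j1 \<noteq> 0" by auto
      define b' where "b' j = b j - (b j1 / c j1) * c j" for j
      have "(\<Sum>j\<in>S0. smult (b' j) (g j)) = (\<Sum>j\<in>S0. smult (b j) (g j) - smult (b j1 / c j1) (smult (c j) (g j)))"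
        by (rule sum.cong) (simp_all add: b'_def smult_diff_left)
      also have "\<dots> = (\<Sum>j\<in>S0. smult (b j) (g j)) - smult (b j1 / c j1) (\<Sum>j\<in>S0. smult (c j) (g j))"
        by (simp only: sum_subtractf smult_sum_right)
      also have "\<dots> = P" using c Pb by simp
      finally have Pb': "P = (\<Sum>j\<in>S0. smult (b' j) (g j))" by simp
      have "b' j1 = 0" using j1 by (simp add: b'_def)
      from smaller[OF j1(1) Pb' this] show False .
    qed
    have S0ne: "S0 \<noteq> {}" using Pb P_nz by auto
    define j0 where "j0 = Min S0"
    have j0S: "j0 \<in> S0" unfolding j0_def using fS0 S0ne by (rule Min_in)
    have S0sub: "S0 \<subseteq> {j0..l}" using S0 fS0 by (auto simp: j0_def)
    define r where "r = card S0"
    have rle: "r \<le> l + 1 - j0"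
    proof -
      have "r \<le> card {j0..l}" unfolding r_def by (rule card_mono) (use S0sub in auto)
      thus ?thesis by simp
    qed
    obtain \<sigma> where \<sigma>: "bij_betw \<sigma> {0..<r} S0" using ex_bij_betw_nat_finite[OF fS0] unfolding r_def by blast
    have im: "\<sigma> ` {0..<r} = S0" using \<sigma> by (rule bij_betw_imp_surj_on)
    define i0 where "i0 = inv_into {0..<r} \<sigma> j0"
    have i0r: "i0 < r" unfolding i0_def using inv_into_into[of j0 \<sigma> "{0..<r}"] j0S im by auto
    have si0: "\<sigma> i0 = j0" unfolding i0_def using f_inv_into_f[of j0 \<sigma> "{0..<r}"] j0S im by auto
    define G where "G i = g (\<sigma> i)" for i
    define Bv where "Bv i = b (\<sigma> i)" for i
    have PG: "P = (\<Sum>i<r. smult (Bv i) (G i))"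
      unfolding Pb G_def Bv_def lessThan_atLeast0 by (rule sum.reindex_bij_betw[OF \<sigma>, symmetric])
    have indG: "\<forall>j<r. c j = 0" if c: "(\<Sum>j<r. smult (c j) (G j)) = 0" for c
    proof -
      define c' where "c' j = c (inv_into {0..<r} \<sigma> j)" for j
      have "(\<Sum>j\<in>S0. smult (c' j) (g j)) = (\<Sum>i\<in>{0..<r}. smult (c' (\<sigma> i)) (g (\<sigma> i)))"
        by (rule sum.reindex_bij_betw[OF \<sigma>, symmetric])
      also have "\<dots> = (\<Sum>i<r. smult (c i) (G i))"
        unfolding lessThan_atLeast0 by (rule sum.cong) (auto simp: c'_def G_def bij_betw_inv_into_left[OF \<sigma>])
      finally have allc: "\<forall>j\<in>S0. c' j = 0" using c indS by simp
      show ?thesis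
      proof (intro allI impI)
        fix j assume j: "j < r"
        have "\<sigma> j \<in> S0" using bij_betwE[OF \<sigma>] j by auto
        hence "c' (\<sigma> j) = 0" using allc by blast
        moreover have "inv_into {0..<r} \<sigma> (\<sigma> j) = j" using bij_betw_inv_into_left[OF \<sigma>] j by auto
        ultimately show "c j = 0" by (simp add: c'_def)
      qed
    qed
    have Gd: "G i dvd L * pderiv (G i)" if "i < r" for i unfolding G_def by (rule gd)
    have G0: "G i \<noteq> 0" if "i < r" for i unfolding G_def by (rule g0)
    have Bne: "Bv i0 \<noteq> 0" unfolding Bv_def si0 by (rule bnz[OF j0S])
    define C where "C = r choose 2"
    define t where "t = degree F"
    define A where "A = mult_poly F (g j0)"
    have wb: "t * (n + mu * C) \<le> t * A + C * (t + D - 1)"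
      using wronsk_bound[OF F_irr FL L0 indG Gd G0 PG i0r Bne P_nz]
      unfolding C_def t_def A_def n_def dL G_def si0 .
    have t1: "t \<ge> 1" unfolding t_def by (rule irr_degree[OF F_irr])
    have D1: "D \<ge> 1" using False by simp
    have "t + D - 1 \<le> t * D"
    proof -
      have "t * D = t * (D - 1) + t" using D1 by (metis add.commute mult.right_neutral distrib_left le_add_diff_inverse)
      moreover have "t * (D - 1) \<ge> D - 1" using t1 by simp
      ultimately show ?thesis by linarith
    qed
    hence "C * (t + D - 1) \<le> C * (t * D)" by (rule mult_le_mono2)
    with wb have "t * (n + mu * C) \<le> t * (A + C * D)" by (simp add: algebra_simps)
    hence nle: "n + mu * C \<le> A + C * D" using t1 by simp
    have muD: "mu \<le> D" unfolding mu_def D_def by (rule sum_mono) (rule mud)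
    have Cle: "C \<le> (l + 1 - j0) choose 2" unfolding C_def by (rule binomial_right_mono[OF rle])
    have "int (n + mu * C) \<le> int (A + C * D)" using nle by (simp only: of_nat_le_iff)
    hence "int n \<le> int A + int C * (int D - int mu)" by (simp add: algebra_simps)
    also have "\<dots> \<le> int A + int ((l + 1 - j0) choose 2) * (int D - int mu)"
      using Cle muD by (intro add_left_mono mult_right_mono) auto
    also have "\<dots> = tm j0" unfolding termj A_def by (simp add: algebra_simps)
    finally show ?thesis using j0S S0 by blast
  qed
  then obtain j0 where j0: "j0 \<in> {1..l}" "int n \<le> tm j0" by blast
  have "tm j0 \<le> Max (tm ` {1..l})" using j0 by (intro Max_ge) auto
  hence M: "int n \<le> Max (tm ` {1..l})" using j0(2) by linarith
  have "tm = (\<lambda>j. \<Sum>i=1..m. int (mult_poly F (f i)) * int (alpha i j)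
               + (int (degree (f i)) - int (mult_poly F (f i))) * int ((l + 1 - j) choose 2))"
    by (intro ext) (simp only: tm_def)
  with M show ?thesis unfolding n_def by simp
qed


end
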